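(* For all $\delta\in(0,1)$, $n\ge 14\log\frac{4}{\delta}$ and $\varepsilon\in\left(\frac{\sqrt{3456}}{n}\log\frac{4}{\delta},1\right)$, the bit-sum protocol $P_{n,\lambda}$ is $(\varepsilon,\delta)$-differentially private in the shuffled model if \[ \lambda=\begin{cases}\dfrac{64}{\varepsilon^2}\log\dfrac{4}{\delta} & \text{if } \varepsilon\ge\sqrt{\dfrac{192}{n}\log\dfrac{4}{\delta}},\\[2mm] n-\dfrac{\varepsilon n^{3/2}}{\sqrt{432\log(4/\delta)}} & \text{otherwise.}\end{cases} \]
   Context: An algorithm $M$ on datasets in $\{0,1\}^n$ is $(\varepsilon,\delta)$-differentially private if for all $X,X'$ differing in one user's entry and every set $T$ of outputs, $\Pr[M(X)\in T]\le e^{\varepsilon}\Pr[M(X')\in T]+\delta$. The bit-sum protocol $P_{n,\lambda}$: each of $n$ users with $x_i\in\{0,1\}$ independently draws $b\sim\mathrm{Ber}(\lambda/n)$ and sends the single message $y_i=x_i$ if $b=0$ and a fresh $\mathrm{Ber}(1/2)$ bit if $b=1$; a shuffler outputs the messages in uniformly random order; the analyzer outputs $\frac{n}{n-\lambda}(\sum_i y_i-\lambda/2)$. The protocol is $(\varepsilon,\delta)$-differentially private in the shuffled model if the map from $(x_1,\dots,x_n)$ to the shuffled sequence of messages is $(\varepsilon,\delta)$-differentially private. $\log$ is the natural logarithm. *)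

theory Defs
  imports "HOL-Probability.Probability"
begin

definition bitsum_randomizer :: "nat \<Rightarrow> real \<Rightarrow> bool \<Rightarrow> bool pmf" where
  "bitsum_randomizer n lam x =
     bind_pmf (bernoulli_pmf (lam / real n))
       (\<lambda>b. if b then bernoulli_pmf (1/2) else return_pmf x)"

fun bitsum_local :: "nat \<Rightarrow> real \<Rightarrow> bool list \<Rightarrow> bool list pmf" where
  "bitsum_local n lam [] = return_pmf []"
| "bitsum_local n lam (x # xs) =
     bind_pmf (bitsum_randomizer n lam x)
       (\<lambda>y. map_pmf (\<lambda>ys. y # ys) (bitsum_local n lam xs))"

definition shuffler :: "'a list \<Rightarrow> 'a list pmf" where
  "shuffler ys =
     map_pmf (\<lambda>\<sigma>. map (\<lambda>i. ys ! \<sigma> i) [0..<length ys])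
       (pmf_of_set {\<sigma>. \<sigma> permutes {0..<length ys}})"

definition bitsum_shuffled :: "nat \<Rightarrow> real \<Rightarrow> bool list \<Rightarrow> bool list pmf" where
  "bitsum_shuffled n lam X = bind_pmf (bitsum_local n lam X) shuffler"

definition neighbours :: "nat \<Rightarrow> 'a list \<Rightarrow> 'a list \<Rightarrow> bool" where
  "neighbours n X X' \<longleftrightarrow> length X = n \<and> length X' = n \<and>
     (\<exists>i<n. \<forall>j<n. j \<noteq> i \<longrightarrow> X ! j = X' ! j)"

definition diff_private :: "nat \<Rightarrow> real \<Rightarrow> real \<Rightarrow> ('a list \<Rightarrow> 'b pmf) \<Rightarrow> bool" where
  "diff_private n \<epsilon> \<delta> M \<longleftrightarrow>
     (\<forall>X X' T. neighbours n X X' \<longrightarrow>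
        measure_pmf.prob (M X) T \<le> exp \<epsilon> * measure_pmf.prob (M X') T + \<delta>)"

end

theory Submission
  imports Defs
begin

lemma int_bind_pmf:
  fixes f :: "'b \<Rightarrow> real"
  assumes "\<And>x. \<bar>f x\<bar> \<le> B"
  shows "measure_pmf.expectation (bind_pmf M N) f =
         measure_pmf.expectation M (\<lambda>x. measure_pmf.expectation (N x) f)"
  using measurable_measure_pmf[of N] assms
  unfolding measure_pmf_bind
  by (intro integral_bind[where K="count_space UNIV" and B=B and B'=1])
     (auto simp: measure_pmf.emeasure_space_1 measure_pmf.finite_measure_axioms)

lemma integrable_bounded_pmf:
  fixes f :: "'b \<Rightarrow> real"
  assumes "\<And>x. \<bar>f x\<bar> \<le> B"
  shows "integrable (measure_pmf M) f"
  using assms by (intro measure_pmf.integrable_const_bound[where B=B]) auto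

definition cnt :: "bool list \<Rightarrow> nat" where "cnt ys = length (filter id ys)"
definition canon :: "nat \<Rightarrow> nat \<Rightarrow> bool list" where
  "canon m c = replicate c True @ replicate (m - c) False"

lemma shuffler_mset:
  assumes "mset ys = mset zs"
  shows "shuffler ys = shuffler zs"
proof -
  obtain \<pi> where \<pi>: "\<pi> permutes {..<length zs}" "permute_list \<pi> zs = ys"
    using mset_eq_permutation[OF assms] by blast
  have len: "length ys = length zs" using \<pi>(2) by auto
  define S where "S = {\<sigma>. \<sigma> permutes {..<length zs}}"
  have idS: "id \<in> S" unfolding S_def by (simp add: permutes_id)
  have S1: "finite S" unfolding S_def by (rule finite_permutations) simp
  have S2: "S \<noteq> {}" using idS by auto
  note S = S1 S2
  have img: "(\<lambda>\<sigma>. \<pi> \<circ> \<sigma>) ` S = S"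
    using image_compose_permutations_left[OF \<pi>(1)] unfolding S_def by (simp add: setcompr_eq_image)
  have inj: "inj_on (\<lambda>\<sigma>. \<pi> \<circ> \<sigma>) S"
  proof (rule inj_onI)
    fix x y assume "\<pi> \<circ> x = \<pi> \<circ> y"
    then have "\<pi> (x a) = \<pi> (y a)" for a by (metis comp_apply)
    then show "x = y" using injD[OF permutes_inj[OF \<pi>(1)]] by (intro ext) blast
  qed
  have "shuffler ys = map_pmf (\<lambda>\<sigma>. map (\<lambda>i. zs ! \<sigma> i) [0..<length zs])
                        (map_pmf (\<lambda>\<sigma>. \<pi> \<circ> \<sigma>) (pmf_of_set S))"
    unfolding shuffler_def map_pmf_comp len atLeast0LessThan S_def[symmetric]
  proof (intro map_pmf_cong refl)
    fix \<sigma> assume "\<sigma> \<in> set_pmf (pmf_of_set S)"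
    then have s: "\<sigma> permutes {..<length zs}" using S unfolding S_def by auto
    show "map (\<lambda>i. ys ! \<sigma> i) [0..<length zs] = map (\<lambda>i. zs ! (\<pi> \<circ> \<sigma>) i) [0..<length zs]"
    proof (intro map_cong refl)
      fix i assume "i \<in> set [0..<length zs]"
      then have i: "i < length zs" by simp
      then have "\<sigma> i < length zs" using permutes_in_image[OF s] by simp
      then show "ys ! \<sigma> i = zs ! (\<pi> \<circ> \<sigma>) i"
        using permute_list_nth[OF \<pi>(1)] \<pi>(2) by force
    qed
  qed
  also have "map_pmf (\<lambda>\<sigma>. \<pi> \<circ> \<sigma>) (pmf_of_set S) = pmf_of_set S"
    using map_pmf_of_set_inj[OF inj S(2) S(1)] img by simp
  finally show ?thesis unfolding shuffler_def S_def atLeast0LessThan .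
qed

lemma cnt_le: "cnt ys \<le> length ys"
  unfolding cnt_def by simp

lemma mset_canon: "mset ys = mset (canon (length ys) (cnt ys))"
proof (induction ys)
  case Nil
  then show ?case by (simp add: canon_def cnt_def)
next
  case (Cons y ys)
  have le: "cnt ys \<le> length ys" by (rule cnt_le)
  show ?case
  proof (cases y)
    case True
    then show ?thesis using Cons by (simp add: canon_def cnt_def)
  next
    case False
    have "Suc (length ys) - cnt ys = Suc (length ys - cnt ys)" using le by simp
    then show ?thesis using Cons False by (simp add: canon_def cnt_def)
  qed
qed

lemma length_local: "ys \<in> set_pmf (bitsum_local n lam X) \<Longrightarrow> length ys = length X"
  by (induction X arbitrary: ys) auto

lemma shuffled_cnt:
  "bitsum_shuffled n lam X =
     bind_pmf (map_pmf cnt (bitsum_local n lam X)) (\<lambda>c. shuffler (canon (length X) c))"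
  unfolding bitsum_shuffled_def bind_map_pmf
proof (intro bind_pmf_cong refl)
  fix ys assume "ys \<in> set_pmf (bitsum_local n lam X)"
  then have "length ys = length X" by (rule length_local)
  then show "shuffler ys = shuffler (canon (length X) (cnt ys))"
    using mset_canon[of ys] shuffler_mset by metis
qed

definition fdp :: "real \<Rightarrow> real \<Rightarrow> 'a pmf \<Rightarrow> 'a pmf \<Rightarrow> bool" where
  "fdp e d P Q \<longleftrightarrow> (\<forall>f. (\<forall>x. 0 \<le> f x \<and> f x \<le> 1) \<longrightarrow>
      measure_pmf.expectation P f \<le> exp e * measure_pmf.expectation Q f + d)"

lemma prob_as_exp: "measure_pmf.prob M A = measure_pmf.expectation M (indicator A)"
  by simp

lemma prob_bind_pmf:
  "measure_pmf.prob (bind_pmf M N) A = measure_pmf.expectation M (\<lambda>x. measure_pmf.prob (N x) A)"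
  using int_bind_pmf[of "indicator A" 1 M N] by (simp add: indicator_def)

lemma fdp_post:
  assumes "fdp e d P Q"
  shows "measure_pmf.prob (bind_pmf P g) T \<le> exp e * measure_pmf.prob (bind_pmf Q g) T + d"
  using assms unfolding fdp_def prob_bind_pmf by auto

lemma fdp_map:
  assumes "fdp e d P Q"
  shows "fdp e d (map_pmf g P) (map_pmf g Q)"
  using assms unfolding fdp_def by auto

lemma fdp_mono:
  assumes "fdp e d P Q" "d \<le> d'" shows "fdp e d' P Q"
  unfolding fdp_def
proof (intro allI impI)
  fix f :: "'a \<Rightarrow> real" assume "\<forall>x. 0 \<le> f x \<and> f x \<le> 1"
  with assms(1) have "measure_pmf.expectation P f \<le> exp e * measure_pmf.expectation Q f + d"
    unfolding fdp_def by blast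
  with assms(2) show "measure_pmf.expectation P f \<le> exp e * measure_pmf.expectation Q f + d'"
    by linarith
qed

lemma fdp_trivial: "1 \<le> d \<Longrightarrow> fdp e d P Q"
  unfolding fdp_def
proof (intro allI impI)
  fix f :: "'a \<Rightarrow> real" assume f: "\<forall>x. 0 \<le> f x \<and> f x \<le> 1" and d: "1 \<le> d"
  have "measure_pmf.expectation P f \<le> 1"
    using f measure_pmf.prob_space_axioms
    by (intro prob_space.integral_le_const) (auto intro: integrable_bounded_pmf[where B=1])
  moreover have "0 \<le> measure_pmf.expectation Q f" using f by (intro integral_nonneg_AE) auto
  ultimately show "measure_pmf.expectation P f \<le> exp e * measure_pmf.expectation Q f + d"
    using d by (smt (verit) exp_gt_zero mult_nonneg_nonneg)
qed

lemma fdp_mix: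
  assumes comp: "\<And>x. x \<in> set_pmf M \<Longrightarrow> fdp e (d x) (P x) (Q x)"
      and dB: "\<And>x. 0 \<le> d x \<and> d x \<le> D"
  shows "fdp e (measure_pmf.expectation M d) (bind_pmf M P) (bind_pmf M Q)"
  unfolding fdp_def
proof (intro allI impI)
  fix f :: "'b \<Rightarrow> real" assume f: "\<forall>x. 0 \<le> f x \<and> f x \<le> 1"
  have fb: "\<And>x. \<bar>f x\<bar> \<le> 1" using f by auto
  have eb: "\<And>R. \<bar>measure_pmf.expectation R f\<bar> \<le> 1"
  proof -
    fix R :: "'b pmf"
    have "measure_pmf.expectation R f \<le> 1"
      using f measure_pmf.prob_space_axioms
      by (intro prob_space.integral_le_const) (auto intro: integrable_bounded_pmf[where B=1])
    moreover have "0 \<le> measure_pmf.expectation R f" using f by (intro integral_nonneg_AE) auto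
    ultimately show "\<bar>measure_pmf.expectation R f\<bar> \<le> 1" by simp
  qed
  have "measure_pmf.expectation (bind_pmf M P) f = measure_pmf.expectation M (\<lambda>x. measure_pmf.expectation (P x) f)"
    by (rule int_bind_pmf[OF fb])
  also have "\<dots> \<le> measure_pmf.expectation M (\<lambda>x. exp e * measure_pmf.expectation (Q x) f + d x)"
  proof (intro integral_mono_AE)
    show "integrable (measure_pmf M) (\<lambda>x. measure_pmf.expectation (P x) f)"
      by (rule integrable_bounded_pmf[where B=1]) (use eb in auto)
    have "\<bar>exp e * measure_pmf.expectation (Q x) f + d x\<bar> \<le> exp e + D" for x
    proof -
      have "\<bar>exp e * measure_pmf.expectation (Q x) f\<bar> \<le> exp e"
        using eb[of "Q x"] by (simp add: abs_mult)
      then show ?thesis using dB[of x] by linarith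
    qed
    then show "integrable (measure_pmf M) (\<lambda>x. exp e * measure_pmf.expectation (Q x) f + d x)"
      by (intro integrable_bounded_pmf[where B="exp e + D"])
    show "AE x in measure_pmf M. measure_pmf.expectation (P x) f \<le> exp e * measure_pmf.expectation (Q x) f + d x"
      unfolding AE_measure_pmf_iff
    proof (intro ballI)
      fix x assume "x \<in> set_pmf M"
      from comp[OF this] f show "measure_pmf.expectation (P x) f \<le> exp e * measure_pmf.expectation (Q x) f + d x"
        unfolding fdp_def by blast
    qed
  qed
  also have "\<dots> = exp e * measure_pmf.expectation M (\<lambda>x. measure_pmf.expectation (Q x) f) + measure_pmf.expectation M d"
  proof -
    have i1: "integrable (measure_pmf M) (\<lambda>x. measure_pmf.expectation (Q x) f)"
      by (rule integrable_bounded_pmf[where B=1]) (use eb in auto)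
    have i2: "integrable (measure_pmf M) d"
      by (rule integrable_bounded_pmf[where B=D]) (use dB in force)
    show ?thesis using i1 i2 by (simp add: Bochner_Integration.integral_add)
  qed
  also have "measure_pmf.expectation M (\<lambda>x. measure_pmf.expectation (Q x) f) = measure_pmf.expectation (bind_pmf M Q) f"
    by (rule int_bind_pmf[OF fb, symmetric])
  finally show "measure_pmf.expectation (bind_pmf M P) f \<le> exp e * measure_pmf.expectation (bind_pmf M Q) f + measure_pmf.expectation M d" .
qed

fun OD :: "real \<Rightarrow> bool list \<Rightarrow> (nat \<times> nat) pmf" where
  "OD p [] = return_pmf (0,0)"
| "OD p (x#xs) = bind_pmf (bernoulli_pmf p)
     (\<lambda>b. map_pmf (\<lambda>(t,h). if b then (t, Suc h) else (t + (if x then 1 else 0), h)) (OD p xs))"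

definition cntdist :: "nat \<Rightarrow> real \<Rightarrow> bool list \<Rightarrow> nat pmf" where
  "cntdist n lam X = map_pmf cnt (bitsum_local n lam X)"

lemma cntdist_Nil: "cntdist n lam [] = return_pmf 0"
  by (simp add: cntdist_def cnt_def)

lemma cntdist_Cons: "cntdist n lam (x#xs) =
   bind_pmf (bitsum_randomizer n lam x) (\<lambda>y. map_pmf (\<lambda>c. (if y then 1 else 0) + c) (cntdist n lam xs))"
  by (auto simp: cntdist_def map_bind_pmf map_pmf_comp cnt_def intro!: bind_pmf_cong map_pmf_cong)

lemma binS: "binomial_pmf (Suc h) (1/2) =
   bind_pmf (bernoulli_pmf (1/2)) (\<lambda>y. map_pmf (\<lambda>u. (if y then 1 else 0) + u) (binomial_pmf h (1/2)))"
  by (subst binomial_pmf_Suc) (auto simp: map_pmf_def)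

lemma step_gen:
  fixes G :: "nat \<Rightarrow> nat pmf"
  assumes GS: "\<And>h. G (Suc h) = bind_pmf (bernoulli_pmf (1/2)) (\<lambda>y. map_pmf (\<lambda>u. (if y then 1 else 0) + u) (G h))"
  shows "bind_pmf (bitsum_randomizer n lam x) (\<lambda>y. map_pmf (\<lambda>c. (if y then 1 else 0) + c)
            (bind_pmf (OD (lam / real n) ys) (\<lambda>(t,h). map_pmf (\<lambda>u. t + u) (G h))))
       = bind_pmf (OD (lam / real n) (x#ys)) (\<lambda>(t,h). map_pmf (\<lambda>u. t + u) (G h))"
proof -
  define p where "p = lam / real n"
  define K where "K = (\<lambda>(t::nat,h). map_pmf (\<lambda>u. t + u) (G h))"
  define F where "F = (\<lambda>b (t::nat,h::nat). if b then (t, Suc h) else (t + (if x then 1 else 0), h))"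
  have "bind_pmf (bitsum_randomizer n lam x) (\<lambda>y. map_pmf (\<lambda>c. (if y then 1 else 0) + c)
            (bind_pmf (OD p ys) K)) = bind_pmf (bernoulli_pmf p) (\<lambda>b.
          bind_pmf (if b then bernoulli_pmf (1/2) else return_pmf x)
            (\<lambda>y. map_pmf (\<lambda>c. (if y then 1 else 0) + c) (bind_pmf (OD p ys) K)))"
    unfolding bitsum_randomizer_def p_def bind_assoc_pmf by simp
  also have "\<dots> = bind_pmf (bernoulli_pmf p) (\<lambda>b. bind_pmf (OD p ys) (\<lambda>z. K (F b z)))"
  proof (intro bind_pmf_cong refl)
    fix b :: bool
    show "bind_pmf (if b then bernoulli_pmf (1/2) else return_pmf x)
            (\<lambda>y. map_pmf (\<lambda>c. (if y then 1 else 0) + c) (bind_pmf (OD p ys) K))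
          = bind_pmf (OD p ys) (\<lambda>z. K (F b z))"
    proof (cases b)
      case False
      have "bind_pmf (if b then bernoulli_pmf (1/2) else return_pmf x)
            (\<lambda>y. map_pmf (\<lambda>c. (if y then 1 else 0) + c) (bind_pmf (OD p ys) K))
          = bind_pmf (OD p ys) (\<lambda>z. map_pmf (\<lambda>c. (if x then 1 else 0) + c) (K z))"
        using False by (simp add: bind_return_pmf map_bind_pmf)
      also have "\<dots> = bind_pmf (OD p ys) (\<lambda>z. K (F b z))"
      proof (intro bind_pmf_cong refl)
        fix z :: "nat \<times> nat"
        obtain t h where z: "z = (t,h)" by force
        show "map_pmf (\<lambda>c. (if x then 1 else 0) + c) (K z) = K (F b z)"
          unfolding z K_def F_def using False
          by (auto simp: map_pmf_comp add_ac intro!: map_pmf_cong)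
      qed
      finally show ?thesis .
    next
      case True
      have "bind_pmf (bernoulli_pmf (1/2))
            (\<lambda>y. map_pmf (\<lambda>c. (if y then 1 else 0) + c) (bind_pmf (OD p ys) K))
          = bind_pmf (bernoulli_pmf (1/2))
            (\<lambda>y. bind_pmf (OD p ys) (\<lambda>z. map_pmf (\<lambda>c. (if y then 1 else 0) + c) (K z)))"
        by (simp add: map_bind_pmf)
      also have "\<dots> = bind_pmf (OD p ys) (\<lambda>z. bind_pmf (bernoulli_pmf (1/2))
            (\<lambda>y. map_pmf (\<lambda>c. (if y then 1 else 0) + c) (K z)))"
        by (rule bind_commute_pmf)
      also have "\<dots> = bind_pmf (OD p ys) (\<lambda>z. K (F b z))"
      proof (intro bind_pmf_cong refl)
        fix z :: "nat \<times> nat"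
        obtain t h where z: "z = (t,h)" by force
        show "bind_pmf (bernoulli_pmf (1/2))
            (\<lambda>y. map_pmf (\<lambda>c. (if y then 1 else 0) + c) (K z)) = K (F b z)"
          unfolding z K_def F_def using True
          by (auto simp: GS map_bind_pmf map_pmf_comp add_ac intro!: bind_pmf_cong map_pmf_cong)
      qed
      finally show ?thesis using True by simp
    qed
  qed
  also have "\<dots> = bind_pmf (OD p (x#ys)) K"
    by (simp add: bind_map_pmf bind_assoc_pmf F_def)
  finally show ?thesis unfolding p_def K_def .
qed

lemma L1: "cntdist n lam xs =
   bind_pmf (OD (lam / real n) xs) (\<lambda>(t,h). map_pmf (\<lambda>u. t + u) (binomial_pmf h (1/2)))"
proof (induction xs)
  case Nil
  then show ?case by (simp add: cntdist_Nil bind_return_pmf binomial_pmf_0)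
next
  case (Cons x xs)
  show ?case unfolding cntdist_Cons Cons
    by (rule step_gen) (rule binS)
qed

lemma L2:
  assumes "p \<in> {0..1}"
  shows "map_pmf snd (OD p xs) = binomial_pmf (length xs) p"
proof (induction xs)
  case Nil
  then show ?case using assms by (simp add: binomial_pmf_0)
next
  case (Cons x xs)
  have "map_pmf snd (OD p (x#xs)) = bind_pmf (bernoulli_pmf p)
           (\<lambda>b. map_pmf (\<lambda>h. (if b then 1 else 0) + h) (map_pmf snd (OD p xs)))"
    by (auto simp: map_bind_pmf map_pmf_comp split: prod.splits intro!: bind_pmf_cong map_pmf_cong)
  also have "\<dots> = binomial_pmf (length (x#xs)) p"
    unfolding Cons using assms by (simp add: binomial_pmf_Suc map_pmf_def)
  finally show ?case .
qed

definition core :: "nat \<Rightarrow> real \<Rightarrow> nat \<Rightarrow> bool \<Rightarrow> nat pmf" where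
  "core n lam h x = bind_pmf (bitsum_randomizer n lam x)
      (\<lambda>y. map_pmf (\<lambda>u. (if y then 1 else 0) + u) (binomial_pmf h (1/2)))"

lemma coreS: "core n lam (Suc h) z = bind_pmf (bernoulli_pmf (1/2))
   (\<lambda>y. map_pmf (\<lambda>u. (if y then 1 else 0) + u) (core n lam h z))"
proof -
  have "core n lam (Suc h) z = bind_pmf (bitsum_randomizer n lam z) (\<lambda>y'. bind_pmf (bernoulli_pmf (1/2))
     (\<lambda>y. map_pmf (\<lambda>u. (if y' then 1 else 0) + ((if y then 1 else 0) + u)) (binomial_pmf h (1/2))))"
    unfolding core_def binS by (simp add: map_bind_pmf map_pmf_comp)
  also have "\<dots> = bind_pmf (bernoulli_pmf (1/2)) (\<lambda>y. bind_pmf (bitsum_randomizer n lam z)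
     (\<lambda>y'. map_pmf (\<lambda>u. (if y' then 1 else 0) + ((if y then 1 else 0) + u)) (binomial_pmf h (1/2))))"
    by (rule bind_commute_pmf)
  also have "\<dots> = bind_pmf (bernoulli_pmf (1/2))
   (\<lambda>y. map_pmf (\<lambda>u. (if y then 1 else 0) + u) (core n lam h z))"
    unfolding core_def
    by (auto simp: map_bind_pmf map_pmf_comp add_ac intro!: bind_pmf_cong map_pmf_cong)
  finally show ?thesis .
qed

definition rem :: "nat \<Rightarrow> 'a list \<Rightarrow> 'a list" where
  "rem i xs = take i xs @ drop (Suc i) xs"

lemma L3:
  assumes "i < length X"
  shows "cntdist n lam X = bind_pmf (OD (lam / real n) (rem i X))
            (\<lambda>(t,h). map_pmf (\<lambda>c. t + c) (core n lam h (X ! i)))"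
  using assms
proof (induction X arbitrary: i)
  case Nil
  then show ?case by simp
next
  case (Cons x xs)
  show ?case
  proof (cases i)
    case 0
    have "cntdist n lam (x#xs) = bind_pmf (bitsum_randomizer n lam x) (\<lambda>y.
       bind_pmf (OD (lam / real n) xs) (\<lambda>z. map_pmf (\<lambda>c. (if y then 1 else 0) + c)
          ((\<lambda>(t,h). map_pmf (\<lambda>u. t + u) (binomial_pmf h (1/2))) z)))"
      unfolding cntdist_Cons L1[of n lam xs] by (simp add: map_bind_pmf)
    also have "\<dots> = bind_pmf (OD (lam / real n) xs) (\<lambda>z. bind_pmf (bitsum_randomizer n lam x) (\<lambda>y.
        map_pmf (\<lambda>c. (if y then 1 else 0) + c)
          ((\<lambda>(t,h). map_pmf (\<lambda>u. t + u) (binomial_pmf h (1/2))) z)))"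
      by (rule bind_commute_pmf)
    also have "\<dots> = bind_pmf (OD (lam / real n) xs)
            (\<lambda>(t,h). map_pmf (\<lambda>c. t + c) (core n lam h x))"
    proof (intro bind_pmf_cong refl)
      fix z :: "nat \<times> nat"
      obtain t h where z: "z = (t,h)" by force
      show "bind_pmf (bitsum_randomizer n lam x) (\<lambda>y.
        map_pmf (\<lambda>c. (if y then 1 else 0) + c)
          ((\<lambda>(t,h). map_pmf (\<lambda>u. t + u) (binomial_pmf h (1/2))) z)) =
         (\<lambda>(t,h). map_pmf (\<lambda>c. t + c) (core n lam h x)) z"
        unfolding z core_def
        by (auto simp: map_bind_pmf map_pmf_comp add_ac intro!: bind_pmf_cong map_pmf_cong)
    qed
    finally show ?thesis using 0 by (simp add: rem_def)
  next
    case (Suc j)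
    then have j: "j < length xs" using Cons by simp
    have "cntdist n lam (x#xs) = bind_pmf (bitsum_randomizer n lam x) (\<lambda>y. map_pmf (\<lambda>c. (if y then 1 else 0) + c)
        (bind_pmf (OD (lam / real n) (rem j xs)) (\<lambda>(t,h). map_pmf (\<lambda>u. t + u) (core n lam h (xs ! j)))))"
      unfolding cntdist_Cons Cons.IH[OF j] ..
    also have "\<dots> = bind_pmf (OD (lam / real n) (x # rem j xs)) (\<lambda>(t,h). map_pmf (\<lambda>u. t + u) (core n lam h (xs ! j)))"
      by (rule step_gen) (rule coreS)
    finally show ?thesis using Suc by (simp add: rem_def)
  qed
qed

lemma R_True: assumes "0 \<le> p" "p \<le> 1" "p = lam / real n"
  shows "bitsum_randomizer n lam True = bernoulli_pmf (1 - p/2)"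
proof (rule pmf_eqI)
  fix y :: bool
  show "pmf (bitsum_randomizer n lam True) y = pmf (bernoulli_pmf (1 - p/2)) y"
    using assms unfolding bitsum_randomizer_def
    by (cases y) (auto simp: pmf_bind algebra_simps)
qed

lemma R_False: assumes "0 \<le> p" "p \<le> 1" "p = lam / real n"
  shows "bitsum_randomizer n lam False = bernoulli_pmf (p/2)"
proof (rule pmf_eqI)
  fix y :: bool
  show "pmf (bitsum_randomizer n lam False) y = pmf (bernoulli_pmf (p/2)) y"
    using assms unfolding bitsum_randomizer_def
    by (cases y) (auto simp: pmf_bind algebra_simps)
qed

definition core' :: "nat \<Rightarrow> real \<Rightarrow> nat pmf" where
  "core' h a = bind_pmf (bernoulli_pmf a) (\<lambda>y. map_pmf (\<lambda>u. (if y then 1 else 0) + u) (binomial_pmf h (1/2)))"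

lemma pmf_core':
  assumes "0 \<le> a" "a \<le> 1"
  shows "pmf (core' h a) c = (1 - a) * pmf (binomial_pmf h (1/2)) c +
           (if c = 0 then 0 else a * pmf (binomial_pmf h (1/2)) (c - 1))"
proof -
  have m1: "pmf (map_pmf (\<lambda>u. 1 + u) (binomial_pmf h (1/2))) c =
           (if c = 0 then 0 else pmf (binomial_pmf h (1/2)) (c - 1))"
  proof (cases c)
    case 0
    then show ?thesis by (auto simp: pmf_eq_0_set_pmf)
  next
    case (Suc k)
    have "pmf (map_pmf Suc (binomial_pmf h (1/2))) (Suc k) = pmf (binomial_pmf h (1/2)) k"
      by (rule pmf_map_inj') simp
    then show ?thesis using Suc by simp
  qed
  have e0: "(+) (0::nat) = id" by auto
  have m0: "map_pmf ((+) (0::nat)) (binomial_pmf h (1/2)) = binomial_pmf h (1/2)"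
    unfolding e0 by simp
  have e1: "(+) (Suc 0) = Suc" by auto
  have m1': "pmf (map_pmf ((+) (Suc 0)) (binomial_pmf h (1/2))) c =
           (if c = 0 then 0 else pmf (binomial_pmf h (1/2)) (c - 1))"
    using m1 unfolding e1 by simp
  show ?thesis unfolding core'_def pmf_bind using assms m1' m0
    by (simp del: pmf_binomial add: algebra_simps)
qed

lemma hoeff:
  assumes "0 < h" "0 \<le> s"
  shows "measure_pmf.prob (binomial_pmf h (1/2)) {x. s \<le> \<bar>real x - real h * (1/2)\<bar>}
           \<le> 2 * exp (-2 * s\<^sup>2 / real h)"
proof -
  interpret binomial_distribution h "1/2" by unfold_locales simp
  show ?thesis using prob_abs_ge[of s] assms by simp
qed

lemma core_bad:
  assumes "0 \<le> a" "a \<le> 1" "0 < h" "0 \<le> s"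
  shows "measure_pmf.prob (core' h a) {c. 2 * s + 1 < \<bar>2 * real c - real h - 1\<bar>}
           \<le> 2 * exp (-2 * s\<^sup>2 / real h)"
proof -
  define S where "S = {c::nat. 2 * s + 1 < \<bar>2 * real c - real h - 1\<bar>}"
  define B where "B = {x::nat. s \<le> \<bar>real x - real h * (1/2)\<bar>}"
  define K where "K = 2 * exp (-2 * s\<^sup>2 / real h)"
  have sub: "(\<lambda>u. (if y then 1 else 0) + u) -` S \<subseteq> B" for y
    unfolding S_def B_def by (cases y) auto
  have le: "measure_pmf.prob (map_pmf (\<lambda>u. (if y then 1 else 0) + u) (binomial_pmf h (1/2))) S \<le> K" for y
  proof -
    have "measure_pmf.prob (map_pmf (\<lambda>u. (if y then 1 else 0) + u) (binomial_pmf h (1/2))) S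
        = measure_pmf.prob (binomial_pmf h (1/2)) ((\<lambda>u. (if y then 1 else 0) + u) -` S)" by simp
    also have "\<dots> \<le> measure_pmf.prob (binomial_pmf h (1/2)) B"
      by (rule measure_pmf.finite_measure_mono[OF sub]) simp
    also have "\<dots> \<le> K" unfolding B_def K_def by (rule hoeff[OF assms(3,4)])
    finally show ?thesis .
  qed
  have "measure_pmf.prob (core' h a) S = a * measure_pmf.prob (map_pmf (\<lambda>u. (if True then 1 else 0) + u) (binomial_pmf h (1/2))) S
     + (1 - a) * measure_pmf.prob (map_pmf (\<lambda>u. (if False then 1 else 0) + u) (binomial_pmf h (1/2))) S"
  proof -
    have e: "((+) (Suc 0)) = Suc" "((+) (0::nat)) = (\<lambda>x. x)" by auto
    show ?thesis
      unfolding core'_def prob_bind_pmf using assms(1,2) by (simp add: e algebra_simps)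
  qed
  also have "\<dots> \<le> a * K + (1 - a) * K"
    using le[of True] le[of False] assms(1,2) by (intro add_mono mult_left_mono) auto
  finally show ?thesis unfolding S_def K_def by (simp add: algebra_simps)
qed

lemma choose_rel: "c \<ge> 1 \<Longrightarrow> c \<le> h \<Longrightarrow>
  real c * real (h choose c) = (real h - real c + 1) * real (h choose (c - 1))"
proof -
  assume c: "c \<ge> 1" "c \<le> h"
  then obtain k where k: "c = Suc k" by (cases c) auto
  have "Suc k * (h choose Suc k) = (h - k) * (h choose k)"
    using binomial_absorption[of k h] binomial_absorb_comp[of h k] by simp
  then have "real (Suc k * (h choose Suc k)) = real ((h - k) * (h choose k))" by simp
  moreover have "real (h - k) = real h - real k" using c k by simp
  ultimately show ?thesis using k by (simp add: algebra_simps)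
qed

lemma bracket:
  fixes h c :: nat and p e s :: real
  assumes p: "0 \<le> p" "p \<le> 1" and e: "0 < e" "e \<le> 1" and s: "0 \<le> s"
    and G: "\<bar>2 * real c - real h - 1\<bar> \<le> 2 * s + 1"
    and cond: "6 * (1 - p) * (s + 1/2) \<le> e * (real h + 1)"
    and ab: "(a = 1 - p/2 \<and> b = p/2) \<or> (a = p/2 \<and> b = 1 - p/2)"
  shows "(1 - a) * (real h - real c + 1) + a * real c \<le>
         (1 + e) * ((1 - b) * (real h - real c + 1) + b * real c)"
proof -
  define q where "q = 1 - p"
  define D where "D = 2 * real c - real h - 1"
  have q0: "0 \<le> q" using p by (simp add: q_def)
  have "q * \<bar>D\<bar> \<le> q * (2 * s + 1)" using G q0 unfolding D_def by (intro mult_left_mono) auto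
  also have "\<dots> = 2 * (q * (s + 1/2))" by (simp add: algebra_simps)
  also have "\<dots> = (6 * (1 - p) * (s + 1/2)) / 3" unfolding q_def by (simp add: field_simps)
  also have "\<dots> \<le> e * (real h + 1) / 3" using cond by (simp add: divide_right_mono)
  finally have qD: "q * \<bar>D\<bar> \<le> e * (real h + 1) / 3" .
  have qD0: "0 \<le> q * \<bar>D\<bar>" using q0 by simp
  have key: "q * \<bar>D\<bar> * (2 + e) \<le> e * (real h + 1)"
  proof -
    have "q * \<bar>D\<bar> * (2 + e) \<le> q * \<bar>D\<bar> * 3" using qD0 e by (intro mult_left_mono) auto
    then show ?thesis using qD by linarith
  qed
  have k1: "q * D * (2 + e) \<le> e * (real h + 1)"
  proof -
    have "q * D * (2 + e) \<le> q * \<bar>D\<bar> * (2 + e)" using q0 e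
      by (intro mult_right_mono mult_left_mono) auto
    then show ?thesis using key by linarith
  qed
  have k2: "- (q * D * (2 + e)) \<le> e * (real h + 1)"
  proof -
    have "- (q * D * (2 + e)) \<le> q * \<bar>D\<bar> * (2 + e)" using q0 e
    proof -
      have "-(q * D) \<le> q * \<bar>D\<bar>" using q0 by (metis abs_ge_minus_self minus_mult_right mult_left_mono)
      then have "-(q * D) * (2 + e) \<le> q * \<bar>D\<bar> * (2 + e)" using e by (intro mult_right_mono) auto
      then show ?thesis by simp
    qed
    then show ?thesis using key by linarith
  qed
  from ab show ?thesis
  proof
    assume ab1: "a = 1 - p/2 \<and> b = p/2"
    have "(1 + e) * ((1 - b) * (real h - real c + 1) + b * real c) -
          ((1 - a) * (real h - real c + 1) + a * real c) = (e * (real h + 1) - q * D * (2 + e)) / 2"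
    proof -
      from ab1 have aa: "a = 1 - p/2" and bb: "b = p/2" by auto
      show ?thesis unfolding aa bb q_def D_def by (simp add: field_simps)
    qed
    moreover have "0 \<le> (e * (real h + 1) - q * D * (2 + e)) / 2" using k1 by simp
    ultimately show ?thesis by (metis diff_ge_0_iff_ge)
  next
    assume ab2: "a = p/2 \<and> b = 1 - p/2"
    have "(1 + e) * ((1 - b) * (real h - real c + 1) + b * real c) -
          ((1 - a) * (real h - real c + 1) + a * real c) = (e * (real h + 1) + q * D * (2 + e)) / 2"
    proof -
      from ab2 have aa: "a = p/2" and bb: "b = 1 - p/2" by auto
      show ?thesis unfolding aa bb q_def D_def by (simp add: field_simps)
    qed
    moreover have "0 \<le> (e * (real h + 1) + q * D * (2 + e)) / 2" using k2 by simp
    ultimately show ?thesis by (metis diff_ge_0_iff_ge)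
  qed
qed

lemma pmf_bin_half: "k \<le> h \<Longrightarrow> pmf (binomial_pmf h (1/2)) k = real (h choose k) * (1/2)^h"
proof -
  assume k: "k \<le> h"
  have "(1/2::real)^k * (1 - 1/2)^(h - k) = (1/2)^(k + (h - k))" by (simp add: power_add)
  also have "k + (h - k) = h" using k by simp
  finally show ?thesis by (simp add: mult.assoc)
qed

lemma pointwise:
  fixes h c :: nat and p e s :: real
  assumes p: "0 \<le> p" "p \<le> 1" and e: "0 < e" "e \<le> 1" and s: "0 \<le> s"
    and hs: "2 * s < real h"
    and G: "\<bar>2 * real c - real h - 1\<bar> \<le> 2 * s + 1"
    and cond: "6 * (1 - p) * (s + 1/2) \<le> e * (real h + 1)"
    and ab: "(a = 1 - p/2 \<and> b = p/2) \<or> (a = p/2 \<and> b = 1 - p/2)"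
  shows "pmf (core' h a) c \<le> exp e * pmf (core' h b) c"
proof -
  have c1: "c \<ge> 1" using G hs by (cases c) auto
  have ch: "c \<le> h" using G hs by auto
  have a01: "0 \<le> a" "a \<le> 1" and b01: "0 \<le> b" "b \<le> 1" using ab p by auto
  define W :: real where "W = (1/2)^h"
  define C1 where "C1 = real (h choose c)"
  define C0 where "C0 = real (h choose (c - 1))"
  define M where "M = real h - real c + 1"
  have W0: "0 < W" unfolding W_def by simp
  have M0: "0 < M" unfolding M_def using ch by simp
  have C10: "0 \<le> C1" "0 \<le> C0" unfolding C1_def C0_def by auto
  have rel: "real c * C1 = M * C0" unfolding C1_def C0_def M_def by (rule choose_rel[OF c1 ch])
  have P: "pmf (core' h a) c = W * ((1 - a) * C1 + a * C0)"
    using pmf_core'[OF a01, of h c] c1 ch pmf_bin_half[of c h] pmf_bin_half[of "c - 1" h]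
    unfolding W_def C1_def C0_def by (simp add: algebra_simps)
  have Q: "pmf (core' h b) c = W * ((1 - b) * C1 + b * C0)"
    using pmf_core'[OF b01, of h c] c1 ch pmf_bin_half[of c h] pmf_bin_half[of "c - 1" h]
    unfolding W_def C1_def C0_def by (simp add: algebra_simps)
  have br: "(1 - a) * M + a * real c \<le> (1 + e) * ((1 - b) * M + b * real c)"
    unfolding M_def by (rule bracket[OF p e s G cond ab])
  have eqa: "M * ((1 - a) * C1 + a * C0) = C1 * ((1 - a) * M + a * real c)"
    using rel by (simp add: algebra_simps)
  have eqb: "M * ((1 - b) * C1 + b * C0) = C1 * ((1 - b) * M + b * real c)"
    using rel by (simp add: algebra_simps)
  have "M * ((1 - a) * C1 + a * C0) \<le> M * ((1 + e) * ((1 - b) * C1 + b * C0))"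
  proof -
    have "M * ((1 - a) * C1 + a * C0) = C1 * ((1 - a) * M + a * real c)" by (rule eqa)
    also have "\<dots> \<le> C1 * ((1 + e) * ((1 - b) * M + b * real c))"
      using br C10 by (intro mult_left_mono) auto
    also have "\<dots> = (1 + e) * (C1 * ((1 - b) * M + b * real c))" by (simp add: algebra_simps)
    also have "\<dots> = (1 + e) * (M * ((1 - b) * C1 + b * C0))" unfolding eqb ..
    also have "\<dots> = M * ((1 + e) * ((1 - b) * C1 + b * C0))" by (simp add: algebra_simps)
    finally show ?thesis .
  qed
  then have i1: "(1 - a) * C1 + a * C0 \<le> (1 + e) * ((1 - b) * C1 + b * C0)"
    using M0 by simp
  have Qn: "0 \<le> (1 - b) * C1 + b * C0" using b01 C10 by simp
  have "(1 + e) * ((1 - b) * C1 + b * C0) \<le> exp e * ((1 - b) * C1 + b * C0)"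
    using Qn by (intro mult_right_mono) (auto simp: add.commute exp_ge_add_one_self)
  with i1 have "(1 - a) * C1 + a * C0 \<le> exp e * ((1 - b) * C1 + b * C0)" by linarith
  then have "W * ((1 - a) * C1 + a * C0) \<le> W * (exp e * ((1 - b) * C1 + b * C0))"
    using W0 by (intro mult_left_mono) auto
  then show ?thesis unfolding P Q by (simp add: algebra_simps)
qed

lemma pmf_core'_zero:
  assumes "0 \<le> a" "a \<le> 1" "h + 1 < c"
  shows "pmf (core' h a) c = 0"
  using assms by (simp add: pmf_core' binomial_eq_0)

lemma core_fdp:
  fixes h :: nat and p e L :: real
  assumes p: "0 \<le> p" "p \<le> 1" and e: "0 < e" "e \<le> 1" and L: "0 < L"
    and hL: "2 * L < real h"
    and cond: "6 * (1 - p) * (sqrt (real h * L / 2) + 1/2) \<le> e * (real h + 1)"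
    and ab: "(a = 1 - p/2 \<and> b = p/2) \<or> (a = p/2 \<and> b = 1 - p/2)"
  shows "fdp e (2 * exp (-L)) (core' h a) (core' h b)"
  unfolding fdp_def
proof (intro allI impI)
  fix f :: "nat \<Rightarrow> real" assume f: "\<forall>x. 0 \<le> f x \<and> f x \<le> 1"
  define s where "s = sqrt (real h * L / 2)"
  have h0: "0 < h" using hL L by simp
  have s0: "0 \<le> s" unfolding s_def using L by simp
  have s2: "s\<^sup>2 = real h * L / 2" unfolding s_def using L by simp
  have hs: "2 * s < real h"
  proof -
    have hh: "real h * (2 * L) < real h * real h"
      using hL h0 by (intro mult_strict_left_mono) auto
    have "(2 * s)\<^sup>2 < (real h)\<^sup>2"
      using s2 hh by (simp add: power2_eq_square power_mult_distrib algebra_simps)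
    then show ?thesis using power2_less_imp_less by fastforce
  qed
  have a01: "0 \<le> a" "a \<le> 1" and b01: "0 \<le> b" "b \<le> 1" using ab p by auto
  define A where "A = {..h+1}"
  define G where "G = {c::nat. \<bar>2 * real c - real h - 1\<bar> \<le> 2 * s + 1}"
  have finA: "finite A" unfolding A_def by simp
  have EP: "measure_pmf.expectation (core' h a) f = (\<Sum>c\<in>A. f c * pmf (core' h a) c)"
  proof (rule integral_measure_pmf_real[OF finA])
    fix c assume "c \<in> set_pmf (core' h a)" "f c \<noteq> 0"
    then have "pmf (core' h a) c \<noteq> 0" by (simp add: set_pmf_iff)
    then show "c \<in> A" unfolding A_def using pmf_core'_zero[OF a01, of h c] by force
  qed
  have EQ: "measure_pmf.expectation (core' h b) f = (\<Sum>c\<in>A. f c * pmf (core' h b) c)"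
  proof (rule integral_measure_pmf_real[OF finA])
    fix c assume "c \<in> set_pmf (core' h b)" "f c \<noteq> 0"
    then have "pmf (core' h b) c \<noteq> 0" by (simp add: set_pmf_iff)
    then show "c \<in> A" unfolding A_def using pmf_core'_zero[OF b01, of h c] by force
  qed
  have split: "(\<Sum>c\<in>A. f c * pmf (core' h a) c) =
      (\<Sum>c\<in>A \<inter> G. f c * pmf (core' h a) c) + (\<Sum>c\<in>A - G. f c * pmf (core' h a) c)"
    using finA by (rule sum.Int_Diff)
  have good: "(\<Sum>c\<in>A \<inter> G. f c * pmf (core' h a) c) \<le> exp e * measure_pmf.expectation (core' h b) f"
  proof -
    have "(\<Sum>c\<in>A \<inter> G. f c * pmf (core' h a) c) \<le> (\<Sum>c\<in>A \<inter> G. f c * (exp e * pmf (core' h b) c))"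
    proof (rule sum_mono)
      fix c assume "c \<in> A \<inter> G"
      then have Gc: "\<bar>2 * real c - real h - 1\<bar> \<le> 2 * s + 1" unfolding G_def by simp
      have "pmf (core' h a) c \<le> exp e * pmf (core' h b) c"
        by (rule pointwise[OF p e s0 hs Gc _ ab]) (use cond in \<open>simp add: s_def\<close>)
      then show "f c * pmf (core' h a) c \<le> f c * (exp e * pmf (core' h b) c)"
        using f by (intro mult_left_mono) auto
    qed
    also have "\<dots> \<le> (\<Sum>c\<in>A. f c * (exp e * pmf (core' h b) c))"
      using f finA by (intro sum_mono2) auto
    also have "\<dots> = exp e * measure_pmf.expectation (core' h b) f"
      unfolding EQ sum_distrib_left by (simp add: algebra_simps)
    finally show ?thesis .
  qed
  have bad: "(\<Sum>c\<in>A - G. f c * pmf (core' h a) c) \<le> 2 * exp (-L)"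
  proof -
    have "(\<Sum>c\<in>A - G. f c * pmf (core' h a) c) \<le> (\<Sum>c\<in>A - G. pmf (core' h a) c)"
      using f by (intro sum_mono) (auto intro: mult_left_le_one_le)
    also have "\<dots> = measure_pmf.prob (core' h a) (A - G)"
      using finA by (simp add: measure_measure_pmf_finite)
    also have "\<dots> \<le> measure_pmf.prob (core' h a) {c. 2 * s + 1 < \<bar>2 * real c - real h - 1\<bar>}"
      by (intro measure_pmf.finite_measure_mono) (auto simp: G_def)
    also have "\<dots> \<le> 2 * exp (-2 * s\<^sup>2 / real h)"
      by (rule core_bad[OF a01 h0 s0])
    also have "-2 * s\<^sup>2 / real h = -L" using s2 h0 by (simp add: field_simps)
    finally show ?thesis .
  qed
  show "measure_pmf.expectation (core' h a) f \<le> exp e * measure_pmf.expectation (core' h b) f + 2 * exp (-L)"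
    using EP split good bad by linarith
qed

lemma chernoff_low:
  fixes p :: real
  assumes p: "0 \<le> p" "p \<le> 1"
  shows "measure_pmf.prob (binomial_pmf N p) {h. real h \<le> real N * p / 2} \<le> exp (- real N * p / 10)"
proof -
  define k where "k = real N * p / 2"
  define z where "z = exp (-1::real)"
  have z0: "0 < z" unfolding z_def by simp
  have ez: "5/2 \<le> exp (1::real)" using exp_lower_Taylor_quadratic[of 1] by simp
  have z04: "z \<le> 2/5"
  proof -
    have "z = 1 / exp 1" unfolding z_def by (simp add: exp_minus field_simps)
    also have "\<dots> \<le> 1 / (5/2)" using ez by (intro divide_left_mono) auto
    finally show ?thesis by simp
  qed
  have "measure_pmf.prob (binomial_pmf N p) {h. real h \<le> k}
      = measure_pmf.expectation (binomial_pmf N p) (indicator {h. real h \<le> k})" by simp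
  also have "\<dots> = (\<Sum>j\<le>N. (real (N choose j) * p ^ j * (1 - p) ^ (N - j)) * indicator {h. real h \<le> k} j)"
    using p by (subst expectation_binomial_pmf') auto
  also have "\<dots> \<le> (\<Sum>j\<le>N. (real (N choose j) * p ^ j * (1 - p) ^ (N - j)) * (exp k * z ^ j))"
  proof (rule sum_mono)
    fix j assume "j \<in> {..N}"
    have ind: "indicator {h. real h \<le> k} j \<le> exp k * z ^ j"
    proof (cases "real j \<le> k")
      case True
      have "exp k * z ^ j = exp (k - real j)" unfolding z_def
        by (simp add: exp_diff exp_of_nat_mult[symmetric] exp_minus field_simps power_minus)
      also have "\<dots> \<ge> 1" using True by simp
      finally show ?thesis by (simp add: indicator_def True)
    next
      case False
      then show ?thesis using z0 by (simp add: indicator_def)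
    qed
    show "(real (N choose j) * p ^ j * (1 - p) ^ (N - j)) * indicator {h. real h \<le> k} j
          \<le> (real (N choose j) * p ^ j * (1 - p) ^ (N - j)) * (exp k * z ^ j)"
      using p ind by (intro mult_left_mono) auto
  qed
  also have "\<dots> = exp k * (\<Sum>j\<le>N. real (N choose j) * (p * z) ^ j * (1 - p) ^ (N - j))"
    by (simp add: sum_distrib_left power_mult_distrib algebra_simps)
  also have "(\<Sum>j\<le>N. real (N choose j) * (p * z) ^ j * (1 - p) ^ (N - j)) = (p * z + (1 - p)) ^ N"
    by (rule binomial_ring[symmetric])
  also have "(p * z + (1 - p)) ^ N \<le> exp (- p * (1 - z)) ^ N"
  proof (rule power_mono)
    show "p * z + (1 - p) \<le> exp (- p * (1 - z))"
      using exp_ge_add_one_self[of "- p * (1 - z)"] by (simp add: algebra_simps)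
    show "0 \<le> p * z + (1 - p)" using p z0 by simp
  qed
  also have "exp (- p * (1 - z)) ^ N = exp (- real N * p * (1 - z))"
    by (simp add: exp_of_nat_mult[symmetric] algebra_simps)
  finally have "measure_pmf.prob (binomial_pmf N p) {h. real h \<le> k} \<le> exp k * exp (- real N * p * (1 - z))"
    by simp
  also have "\<dots> = exp (k - real N * p * (1 - z))" by (simp add: exp_add[symmetric])
  also have "\<dots> \<le> exp (- real N * p / 10)"
  proof -
    have "0 \<le> real N * p" using p by simp
    then have "real N * p * (1/10) \<le> real N * p * (1/2 - z)"
      using z04 by (intro mult_left_mono) auto
    then show ?thesis unfolding k_def by (simp add: algebra_simps)
  qed
  finally show ?thesis unfolding k_def .
qed

lemma rem_eq:
  assumes "length X = n" "length X' = n" "i < n" "\<forall>j<n. j \<noteq> i \<longrightarrow> X ! j = X' ! j"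
  shows "rem i X = rem i X'"
proof (rule nth_equalityI)
  show "length (rem i X) = length (rem i X')" using assms by (simp add: rem_def)
  fix j assume j: "j < length (rem i X)"
  then have jn: "j < n - 1" using assms by (simp add: rem_def)
  show "rem i X ! j = rem i X' ! j"
  proof (cases "j < i")
    case True
    then show ?thesis using assms jn by (simp add: rem_def nth_append)
  next
    case False
    then have "rem i X ! j = X ! Suc j" "rem i X' ! j = X' ! Suc j"
      using assms jn by (simp_all add: rem_def nth_append min_def)
    moreover have "X ! Suc j = X' ! Suc j" using assms(4) False jn by auto
    ultimately show ?thesis by simp
  qed
qed

lemma core_eq:
  assumes "0 \<le> lam / real n" "lam / real n \<le> 1"
  shows "core n lam h x = core' h (if x then 1 - (lam / real n)/2 else (lam / real n)/2)"
  unfolding core_def core'_def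
  using R_True[OF assms refl] R_False[OF assms refl] by (cases x) simp_all

theorem generic:
  fixes n :: nat and e L lam :: real
  assumes p: "0 \<le> lam / real n" "lam / real n \<le> 1" and e: "0 < e" "e \<le> 1" and L: "0 < L"
    and C1: "10 * L \<le> real (n - 1) * (lam / real n)"
    and C2: "\<And>h::nat. real (n - 1) * (lam / real n) / 2 < real h \<Longrightarrow>
               2 * L < real h \<and>
               6 * (1 - lam / real n) * (sqrt (real h * L / 2) + 1/2) \<le> e * (real h + 1)"
  shows "diff_private n e (4 * exp (-L)) (bitsum_shuffled n lam)"
  unfolding diff_private_def
proof (intro allI impI)
  fix X X' :: "bool list" and T
  assume nb: "neighbours n X X'"
  define p where "p = lam / real n"
  define N where "N = n - 1"
  have p01: "0 \<le> p" "p \<le> 1" using p unfolding p_def by auto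
  obtain i where i: "i < n" and agree: "\<forall>j<n. j \<noteq> i \<longrightarrow> X ! j = X' ! j"
    and lX: "length X = n" and lX': "length X' = n"
    using nb unfolding neighbours_def by blast
  show "measure_pmf.prob (bitsum_shuffled n lam X) T
        \<le> exp e * measure_pmf.prob (bitsum_shuffled n lam X') T + 4 * exp (-L)"
  proof (cases "X ! i = X' ! i")
    case True
    have "X = X'"
    proof (rule nth_equalityI)
      show "length X = length X'" using lX lX' by simp
      fix j assume "j < length X"
      then show "X ! j = X' ! j" using agree True lX by (cases "j = i") auto
    qed
    moreover have "measure_pmf.prob (bitsum_shuffled n lam X) T
        \<le> exp e * measure_pmf.prob (bitsum_shuffled n lam X') T"
    proof -
      have "1 * measure_pmf.prob (bitsum_shuffled n lam X) T
        \<le> exp e * measure_pmf.prob (bitsum_shuffled n lam X) T"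
        using e by (intro mult_right_mono) auto
      then show ?thesis using \<open>X = X'\<close> by simp
    qed
    moreover have "0 \<le> 4 * exp (-L)" by simp
    ultimately show ?thesis by linarith
  next
    case False
    have remeq: "rem i X = rem i X'" by (rule rem_eq[OF lX lX' i agree])
    define OM where "OM = OD p (rem i X)"
    define d where "d = (\<lambda>z::nat \<times> nat. if real N * p / 2 < real (snd z) then 2 * exp (-L) else 1)"
    define B where "B = {z::nat \<times> nat. real (snd z) \<le> real N * p / 2}"
    have cX: "cntdist n lam X = bind_pmf OM (\<lambda>(t,h). map_pmf (\<lambda>c. t + c) (core n lam h (X ! i)))"
      unfolding OM_def p_def using L3[of i X n lam] i lX by simp
    have cX': "cntdist n lam X' = bind_pmf OM (\<lambda>(t,h). map_pmf (\<lambda>c. t + c) (core n lam h (X' ! i)))"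
      unfolding OM_def p_def remeq using L3[of i X' n lam] i lX' by simp
    have comp: "fdp e (d z) ((\<lambda>(t,h). map_pmf (\<lambda>c. t + c) (core n lam h (X ! i))) z)
                            ((\<lambda>(t,h). map_pmf (\<lambda>c. t + c) (core n lam h (X' ! i))) z)" for z
    proof -
      obtain t h where z: "z = (t,h)" by force
      show ?thesis
      proof (cases "real N * p / 2 < real h")
        case True
        from C2[of h] True have h1: "2 * L < real h"
          and h2: "6 * (1 - p) * (sqrt (real h * L / 2) + 1/2) \<le> e * (real h + 1)"
          unfolding N_def p_def by auto
        have ab: "((if X ! i then 1 - p/2 else p/2) = 1 - p/2 \<and> (if X' ! i then 1 - p/2 else p/2) = p/2) \<or>
                  ((if X ! i then 1 - p/2 else p/2) = p/2 \<and> (if X' ! i then 1 - p/2 else p/2) = 1 - p/2)"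
          using False by (cases "X ! i"; cases "X' ! i") simp_all
        have "fdp e (2 * exp (-L)) (core' h (if X ! i then 1 - p/2 else p/2)) (core' h (if X' ! i then 1 - p/2 else p/2))"
          by (rule core_fdp[OF p01 e L h1 h2 ab])
        then have "fdp e (2 * exp (-L)) (map_pmf (\<lambda>c. t + c) (core n lam h (X ! i)))
                     (map_pmf (\<lambda>c. t + c) (core n lam h (X' ! i)))"
          unfolding core_eq[OF p] p_def[symmetric] by (rule fdp_map)
        then show ?thesis unfolding z d_def using True by simp
      next
        case False
        then show ?thesis unfolding z d_def by (simp add: fdp_trivial)
      qed
    qed
    have dB: "0 \<le> d z \<and> d z \<le> 2" for z
    proof -
      have "exp (-L) \<le> 1" using L by simp
      then show ?thesis unfolding d_def by auto
    qed
    have mix: "fdp e (measure_pmf.expectation OM d) (cntdist n lam X) (cntdist n lam X')"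
      unfolding cX cX' by (rule fdp_mix[OF comp dB])
    have Ed: "measure_pmf.expectation OM d \<le> 4 * exp (-L)"
    proof -
      have "measure_pmf.expectation OM d \<le> measure_pmf.expectation OM (\<lambda>z. 2 * exp (-L) + indicator B z)"
      proof (rule integral_mono)
        show "integrable (measure_pmf OM) d" by (rule integrable_bounded_pmf[where B=2]) (use dB in force)
        show "integrable (measure_pmf OM) (\<lambda>z. 2 * exp (-L) + indicator B z)"
          by (rule integrable_bounded_pmf[where B="2 * exp (-L) + 1"]) (auto simp: indicator_def)
        fix z show "d z \<le> 2 * exp (-L) + indicator B z"
          unfolding d_def B_def by (auto simp: indicator_def)
      qed
      also have "\<dots> = 2 * exp (-L) + measure_pmf.prob OM B"
        by (subst Bochner_Integration.integral_add) (auto intro: integrable_bounded_pmf[where B=1] simp: indicator_def)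
      also have "measure_pmf.prob OM B = measure_pmf.prob (map_pmf snd OM) {h. real h \<le> real N * p / 2}"
        unfolding B_def by (simp add: vimage_def)
      also have "map_pmf snd OM = binomial_pmf N p"
      proof -
        have "length (rem i X) = N" unfolding rem_def N_def using i lX by simp
        then show ?thesis unfolding OM_def using L2[of p "rem i X"] p01 by simp
      qed
      also have "measure_pmf.prob (binomial_pmf N p) {h. real h \<le> real N * p / 2} \<le> exp (- real N * p / 10)"
        by (rule chernoff_low[OF p01])
      also have "exp (- real N * p / 10) \<le> exp (-L)"
      proof -
        have gen: "10 * L \<le> x \<Longrightarrow> L \<le> x / 10" for x :: real by simp
        have "L \<le> real N * p / 10" unfolding N_def p_def by (rule gen[OF C1])
        then show ?thesis by simp
      qed
      finally have "measure_pmf.expectation OM d \<le> 3 * exp (-L)" by simp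
      moreover have "0 \<le> exp (-L)" by simp
      ultimately show ?thesis by linarith
    qed
    have fin: "fdp e (4 * exp (-L)) (cntdist n lam X) (cntdist n lam X')"
      by (rule fdp_mono[OF mix Ed])
    show ?thesis
      unfolding shuffled_cnt lX lX' by (rule fdp_post[OF fin[unfolded cntdist_def]])
  qed
qed

lemma case1:
  fixes n :: nat and e L :: real
  assumes L: "1 < L" and n: "58 < real n" and e: "0 < e" "e \<le> 1" and ce: "192 / real n * L \<le> e\<^sup>2"
  defines "p \<equiv> (64 / e\<^sup>2 * L) / real n"
  shows "0 \<le> p" "p \<le> 1" "10 * L \<le> real (n - 1) * p"
    "\<And>h::nat. real (n - 1) * p / 2 < real h \<Longrightarrow>
        2 * L < real h \<and> 6 * (1 - p) * (sqrt (real h * L / 2) + 1/2) \<le> e * (real h + 1)"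
proof -
  have n0: "0 < real n" using n by simp
  have e2: "0 < e\<^sup>2" "e\<^sup>2 \<le> 1" using e by (auto simp: power_le_one)
  have pe: "p = 64 * L / (e\<^sup>2 * real n)" unfolding p_def by (simp add: field_simps)
  show p0: "0 \<le> p" unfolding pe using L e2 n0 by simp
  have "192 * L \<le> e\<^sup>2 * real n" using ce n0 by (simp add: field_simps)
  then have "64 * L \<le> e\<^sup>2 * real n" using L by simp
  then show "p \<le> 1" unfolding pe using e2 n0 by (simp add: field_simps)
  have rn: "real (n - 1) = real n - 1" using n by (simp add: of_nat_diff)
  have np: "real (n - 1) * p = 64 * L / e\<^sup>2 * ((real n - 1) / real n)"
    unfolding pe rn by (simp add: field_simps)
  have frac: "31/32 \<le> (real n - 1) / real n" using n n0 by (simp add: field_simps)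
  have np2: "62 * L / e\<^sup>2 \<le> real (n - 1) * p"
  proof -
    have "64 * L / e\<^sup>2 * (31/32) \<le> 64 * L / e\<^sup>2 * ((real n - 1) / real n)"
      using frac L e2 by (intro mult_left_mono) auto
    then show ?thesis unfolding np by simp
  qed
  have "62 * L \<le> 62 * L / e\<^sup>2"
    using L e2 by (simp add: field_simps mult_left_le_one_le)
  then show "10 * L \<le> real (n - 1) * p" using np2 L by linarith
  fix h :: nat
  assume h: "real (n - 1) * p / 2 < real h"
  have "31 * L / e\<^sup>2 < real h" using h np2 by simp
  then have eh: "31 * L < e\<^sup>2 * real h" using e2 by (simp add: field_simps)
  have heh: "e\<^sup>2 * real h \<le> real h" using e2 by (simp add: mult_left_le_one_le)
  show "2 * L < real h \<and> 6 * (1 - p) * (sqrt (real h * L / 2) + 1/2) \<le> e * (real h + 1)"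
  proof
    show "2 * L < real h" using eh heh L by linarith
    define S where "S = sqrt (real h * L / 2)"
    have S0: "0 \<le> S" unfolding S_def using L by simp
    have S2: "S\<^sup>2 = real h * L / 2" unfolding S_def using L by simp
    have "(6 * S)\<^sup>2 \<le> (7/8 * (e * real h))\<^sup>2"
    proof -
      have "(6 * S)\<^sup>2 = 36 * S\<^sup>2" by (simp add: power_mult_distrib)
      also have "\<dots> = 18 * L * real h" unfolding S2 by simp
      also have "\<dots> \<le> 49/64 * (e\<^sup>2 * real h) * real h"
      proof (rule mult_right_mono)
        show "18 * L \<le> 49/64 * (e\<^sup>2 * real h)" using eh L by linarith
      qed simp
      also have "\<dots> = (7/8 * (e * real h))\<^sup>2"
        by (simp add: power_mult_distrib power2_eq_square mult.assoc)
      finally show ?thesis .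
    qed
    moreover have "0 \<le> 7/8 * (e * real h)" using e by simp
    ultimately have s1: "6 * S \<le> 7/8 * (e * real h)"
      by (rule power2_le_imp_le)
    have ee: "e * e \<le> e * 1" using e by (intro mult_left_mono) auto
    have "e\<^sup>2 * real h \<le> e * real h"
      by (rule mult_right_mono) (use ee in \<open>simp_all add: power2_eq_square\<close>)
    then have s2: "3 \<le> 1/8 * (e * real h)" using eh L heh by linarith
    have "6 * (1 - p) * (S + 1/2) \<le> 6 * 1 * (S + 1/2)"
      using p0 S0 by (intro mult_right_mono mult_left_mono) auto
    also have "\<dots> = 6 * S + 3" by simp
    also have "\<dots> \<le> 7/8 * (e * real h) + 1/8 * (e * real h)" using s1 s2 by linarith
    also have "\<dots> = e * real h" by simp
    also have "\<dots> \<le> e * (real h + 1)" using e by simp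
    finally show "6 * (1 - p) * (sqrt (real h * L / 2) + 1/2) \<le> e * (real h + 1)"
      unfolding S_def .
  qed
qed

lemma case2:
  fixes n :: nat and e L :: real
  assumes L: "1 < L" and n: "58 * L < real n" and e: "0 < e" and ce: "e\<^sup>2 < 192 / real n * L"
  defines "p \<equiv> (real n - e * real n powr (3/2) / sqrt (432 * L)) / real n"
  shows "0 \<le> p" "p \<le> 1" "10 * L \<le> real (n - 1) * p"
    "\<And>h::nat. real (n - 1) * p / 2 < real h \<Longrightarrow>
        2 * L < real h \<and> 6 * (1 - p) * (sqrt (real h * L / 2) + 1/2) \<le> e * (real h + 1)"
proof -
  have n58: "58 < real n" using n L by linarith
  have n0: "0 < real n" using n58 by simp
  define q where "q = e * sqrt (real n) / sqrt (432 * L)"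
  have pw: "real n powr (3/2) = real n * sqrt (real n)"
  proof -
    have "real n powr (3/2) = real n powr (1 + 1/2)" by simp
    also have "\<dots> = real n powr 1 * real n powr (1/2)" by (rule powr_add)
    also have "\<dots> = real n * sqrt (real n)" using n0 by (simp add: powr_half_sqrt)
    finally show ?thesis .
  qed
  have pq: "p = 1 - q" unfolding p_def q_def pw using n0 by (simp add: field_simps)
  have q0: "0 < q" unfolding q_def using e n0 L by simp
  have q2: "q\<^sup>2 = e\<^sup>2 * real n / (432 * L)"
    unfolding q_def using n0 L by (simp add: power_divide power_mult_distrib)
  have "q\<^sup>2 < (2/3)\<^sup>2"
  proof -
    have "e\<^sup>2 * real n < 192 * L" using ce n0 by (simp add: field_simps)
    then have "e\<^sup>2 * real n / (432 * L) < 192 * L / (432 * L)" using L by (intro divide_strict_right_mono) auto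
    also have "\<dots> = (2/3)\<^sup>2" using L by (simp add: power2_eq_square)
    finally show ?thesis unfolding q2 .
  qed
  then have q23: "q < 2/3" by (rule power2_less_imp_less) simp
  show p0: "0 \<le> p" unfolding pq using q23 by simp
  show "p \<le> 1" unfolding pq using q0 by simp
  have rn: "real (n - 1) = real n - 1" using n58 by (simp add: of_nat_diff)
  have np: "(real n - 1) / 3 \<le> real (n - 1) * p"
  proof -
    have "(real n - 1) * (1/3) \<le> (real n - 1) * p" using n58 q23 unfolding pq by (intro mult_left_mono) auto
    then show ?thesis unfolding rn by simp
  qed
  have "30 * L \<le> real n - 1" using n L by linarith
  then have "10 * L \<le> (real n - 1) / 3" by simp
  then show "10 * L \<le> real (n - 1) * p" using np by (rule order_trans)
  fix h :: nat
  assume h: "real (n - 1) * p / 2 < real h"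
  have "(real n - 1) / 6 \<le> real (n - 1) * p / 2" using np by simp
  then have hb: "(real n - 1) / 6 < real h" using h by (rule le_less_trans)
  show "2 * L < real h \<and> 6 * (1 - p) * (sqrt (real h * L / 2) + 1/2) \<le> e * (real h + 1)"
  proof
    have "real n - 1 < 6 * real h" using hb by simp
    then show "2 * L < real h" using n L by linarith
    define S where "S = sqrt (real h * L / 2)"
    have S0: "0 \<le> S" unfolding S_def using L by simp
    have S2: "S\<^sup>2 = real h * L / 2" unfolding S_def using L by simp
    have h0: "0 \<le> real h" by simp
    have "(6 * q * S)\<^sup>2 \<le> (3/4 * (e * real h))\<^sup>2"
    proof -
      have "(6 * q * S)\<^sup>2 = 36 * q\<^sup>2 * S\<^sup>2" by (simp add: power_mult_distrib)
      also have "\<dots> = (real n / 24) * (e\<^sup>2 * real h)" unfolding q2 S2 using L by (simp add: field_simps)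
      also have "\<dots> \<le> (9/16 * real h) * (e\<^sup>2 * real h)"
        by (rule mult_right_mono) (use hb n58 in \<open>simp_all\<close>)
      also have "\<dots> = (3/4 * (e * real h))\<^sup>2" by (simp add: power_mult_distrib power2_eq_square mult.assoc mult.left_commute)
      finally show ?thesis .
    qed
    moreover have "0 \<le> 3/4 * (e * real h)" using e by simp
    ultimately have s1: "6 * q * S \<le> 3/4 * (e * real h)" by (rule power2_le_imp_le)
    have "(12 * q)\<^sup>2 \<le> (e * real h)\<^sup>2"
    proof -
      have "(12 * q)\<^sup>2 = e\<^sup>2 * (real n / (3 * L))" unfolding power_mult_distrib q2 using L by (simp add: field_simps)
      also have "\<dots> \<le> e\<^sup>2 * (real h)\<^sup>2"
      proof (rule mult_left_mono)
        have "real n / (3 * L) \<le> real n / 3" using L n0 by (intro divide_left_mono) auto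
        also have "\<dots> \<le> ((real n - 1) / 6)\<^sup>2"
        proof -
          have "12 * real n \<le> (real n - 1) * (real n - 1)"
          proof -
            have "12 * real n \<le> 57 * (real n - 1)" using n58 by simp
            also have "\<dots> \<le> (real n - 1) * (real n - 1)" using n58 by (intro mult_right_mono) auto
            finally show ?thesis .
          qed
          then show ?thesis by (simp add: power2_eq_square field_simps)
        qed
        also have "\<dots> \<le> (real h)\<^sup>2" using hb n58 by (intro power_mono) auto
        finally show "real n / (3 * L) \<le> (real h)\<^sup>2" .
      qed simp
      also have "\<dots> = (e * real h)\<^sup>2" by (simp add: power_mult_distrib)
      finally show ?thesis .
    qed
    moreover have "0 \<le> e * real h" using e by simp
    ultimately have "12 * q \<le> e * real h" by (rule power2_le_imp_le)
    then have s2: "3 * q \<le> 1/4 * (e * real h)" by simp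
    have "6 * (1 - p) * (S + 1/2) = 6 * q * S + 3 * q" unfolding pq by (simp add: algebra_simps)
    also have "\<dots> \<le> 3/4 * (e * real h) + 1/4 * (e * real h)" using s1 s2 by linarith
    also have "\<dots> = e * real h" by simp
    also have "\<dots> \<le> e * (real h + 1)" using e by simp
    finally show "6 * (1 - p) * (sqrt (real h * L / 2) + 1/2) \<le> e * (real h + 1)"
      unfolding S_def .
  qed
qed

theorem lemma4p8:
  fixes n :: nat and \<epsilon> \<delta> lam :: real
  assumes "0 < \<delta>" and "\<delta> < 1"
    and "real n \<ge> 14 * ln (4 / \<delta>)"
    and "sqrt 3456 / real n * ln (4 / \<delta>) < \<epsilon>" and "\<epsilon> < 1"
    and "lam = (if \<epsilon> \<ge> sqrt (192 / real n * ln (4 / \<delta>))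
                then 64 / \<epsilon>\<^sup>2 * ln (4 / \<delta>)
                else real n - \<epsilon> * real n powr (3/2) / sqrt (432 * ln (4 / \<delta>)))"
  shows "diff_private n \<epsilon> \<delta> (bitsum_shuffled n lam)"
proof -
  define L where "L = ln (4 / \<delta>)"
  have d4: "4 < 4 / \<delta>" using assms(1,2) by (simp add: field_simps)
  have "exp 1 < 4 / \<delta>" using exp_le d4 by linarith
  then have "ln (exp 1) < ln (4 / \<delta>)" using assms(1) by (subst ln_less_cancel_iff) auto
  then have L1: "1 < L" unfolding L_def by simp
  have dL: "\<delta> = 4 * exp (-L)"
  proof -
    have "exp L = 4 / \<delta>" unfolding L_def using assms(1) by simp
    then show ?thesis using assms(1) by (simp add: exp_minus field_simps)
  qed
  have n0: "0 < real n" using assms(3) L1 unfolding L_def by linarith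
  have s58: "58 \<le> sqrt 3456" by (rule real_le_rsqrt) simp
  have "sqrt 3456 / real n * L < 1" using assms(4,5) unfolding L_def by linarith
  then have "sqrt 3456 * L < real n" using n0 by (simp add: field_simps)
  moreover have "58 * L \<le> sqrt 3456 * L" using s58 L1 by (intro mult_right_mono) auto
  ultimately have nL: "58 * L < real n" by linarith
  have n58: "58 < real n" using nL L1 by linarith
  have e0: "0 < \<epsilon>"
  proof -
    have "0 \<le> sqrt 3456 / real n * ln (4 / \<delta>)" using n0 L1 unfolding L_def by simp
    then show ?thesis using assms(4) by linarith
  qed
  have e1: "\<epsilon> \<le> 1" using assms(5) by simp
  have x0: "0 \<le> 192 / real n * L" using n0 L1 by simp
  show ?thesis
  proof (cases "sqrt (192 / real n * L) \<le> \<epsilon>")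
    case True
    have "(sqrt (192 / real n * L))\<^sup>2 \<le> \<epsilon>\<^sup>2" using True by (intro power_mono) (use x0 in auto)
    then have ce: "192 / real n * L \<le> \<epsilon>\<^sup>2" using x0 by simp
    have lam: "lam = 64 / \<epsilon>\<^sup>2 * L" using assms(6) True unfolding L_def by simp
    note c = case1[OF L1 n58 e0 e1 ce]
    have "diff_private n \<epsilon> (4 * exp (-L)) (bitsum_shuffled n lam)"
      unfolding lam by (rule generic[OF c(1,2) e0 e1 _ c(3) c(4)]) (use L1 in simp)
    then show ?thesis unfolding dL .
  next
    case False
    have "\<epsilon>\<^sup>2 < (sqrt (192 / real n * L))\<^sup>2" using False e0 by (intro power_strict_mono) auto
    then have ce: "\<epsilon>\<^sup>2 < 192 / real n * L" using x0 by simp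
    have lam: "lam = real n - \<epsilon> * real n powr (3/2) / sqrt (432 * L)"
      using assms(6) False unfolding L_def by simp
    note c = case2[OF L1 nL e0 ce]
    have "diff_private n \<epsilon> (4 * exp (-L)) (bitsum_shuffled n lam)"
      unfolding lam by (rule generic[OF c(1,2) e0 e1 _ c(3) c(4)]) (use L1 in simp)
    then show ?thesis unfolding dL .
  qed
qed

end
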